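(* Let $(X,\rho)$ be a separable metric space, $\mu$ a Radon measure on $X$, and $\{X_i\}_{i=1}^\infty$ a $\mu$-measurable decomposition of $X$. Suppose that for each $i$ there is $\delta_i\in\Upsilon(X_i,\mu)$ with $\|\delta_i\|_{\mathrm{op}}\le1$. Then the linear operator $\delta:\mathrm{Lip}_b(X)\to L^\infty(X,\mu)$, $\delta f=\sum_{i=1}^\infty\chi_{X_i}\,\delta_i(f|_{X_i})$, is a derivation in $\Upsilon(X,\mu)$ with $\|\delta\|_{\mathrm{op}}\le1$.
   Context: A collection $\{X_i\}$ of $\mu$-measurable sets is a $\mu$-measurable decomposition if $\mu$ is concentrated on $\bigcup_iX_i$ and $\mu(X_i\cap X_j)=0$ for $i\ne j$. For a metric space $Y$ with Borel measure $\mu$, $\mathrm{Lip}_b(Y)$ is the space of bounded Lipschitz functions with norm $\|f\|_{\mathrm{Lip}}=\max(\sup|f|,L(f))$; a derivation is a linear map $\delta:\mathrm{Lip}_b(Y)\to L^\infty(Y,\mu)$ with the Leibniz rule $\delta(fg)=f\delta g+g\delta f$ and such that whenever a net $(f_\alpha)$ with $\sup\|f_\alpha\|_{\mathrm{Lip}}<\infty$ converges pointwise to $f$, $\delta f_\alpha\to\delta f$ weak-* in $L^\infty(Y,\mu)$; $\Upsilon(Y,\mu)$ is the set of derivations, and $\Upsilon(X_i,\mu)$ refers to the subspace $X_i$ with the restricted metric and measure. $\|\delta\|_{\mathrm{op}}=\sup\{\|\delta f\|_{L^\infty}:\|f\|_{\mathrm{Lip}}\le1\}$. *)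

theory Defs
  imports "HOL-Analysis.Analysis"
begin

definition radon_measure :: "'a::metric_space measure \<Rightarrow> bool" where
  "radon_measure \<mu> \<longleftrightarrow>
     sets \<mu> = sets borel \<and>
     (\<forall>x. \<exists>U. open U \<and> x \<in> U \<and> emeasure \<mu> U < \<infinity>) \<and>
     (\<forall>A\<in>sets borel. emeasure \<mu> A = (SUP K\<in>{K. compact K \<and> K \<subseteq> A}. emeasure \<mu> K))"

text \<open>mu-measurable sets are the sets of the completion of mu.\<close>
definition measurable_decomposition :: "'a measure \<Rightarrow> (nat \<Rightarrow> 'a set) \<Rightarrow> bool" where
  "measurable_decomposition \<mu> X \<longleftrightarrow>
     (\<forall>i. X i \<in> sets (completion \<mu>)) \<and>
     space \<mu> - (\<Union>i. X i) \<in> null_sets (completion \<mu>) \<and>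
     (\<forall>i j. i \<noteq> j \<longrightarrow> X i \<inter> X j \<in> null_sets (completion \<mu>))"

definition lipb :: "'a::metric_space set \<Rightarrow> ('a \<Rightarrow> real) \<Rightarrow> bool" where
  "lipb S f \<longleftrightarrow> bounded (f ` S) \<and> (\<exists>L. L-lipschitz_on S f)"

definition lip_const :: "'a::metric_space set \<Rightarrow> ('a \<Rightarrow> real) \<Rightarrow> real" where
  "lip_const S f = Inf {L. L-lipschitz_on S f}"

definition lip_norm :: "'a::metric_space set \<Rightarrow> ('a \<Rightarrow> real) \<Rightarrow> real" where
  "lip_norm S f = max (SUP x\<in>S. \<bar>f x\<bar>) (lip_const S f)"

definition Linf_norm :: "'a measure \<Rightarrow> 'a set \<Rightarrow> ('a \<Rightarrow> real) \<Rightarrow> ereal" where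
  "Linf_norm \<mu> S g = Inf {C. AE x in \<mu>. x \<in> S \<longrightarrow> ereal \<bar>g x\<bar> \<le> C}"

text \<open>Elements of
  Lip_b(S) are represented by functions on the whole type (only values on S matter),
  elements of L-infinity(S, mu) by functions measurable for the completion of mu,
  equality being a.e. on S.  Nets are represented by filters on the function space.\<close>
definition derivation :: "'a::metric_space set \<Rightarrow> 'a measure \<Rightarrow> (('a \<Rightarrow> real) \<Rightarrow> ('a \<Rightarrow> real)) \<Rightarrow> bool" where
  "derivation S \<mu> \<delta> \<longleftrightarrow>
     (\<forall>f. lipb S f \<longrightarrow>
        set_borel_measurable (completion \<mu>) S (\<delta> f) \<and>
        (\<exists>C. AE x in completion \<mu>. x \<in> S \<longrightarrow> \<bar>\<delta> f x\<bar> \<le> C)) \<and>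
     (\<forall>f g. lipb S f \<longrightarrow> lipb S g \<longrightarrow> (\<forall>x\<in>S. f x = g x) \<longrightarrow>
        (AE x in completion \<mu>. x \<in> S \<longrightarrow> \<delta> f x = \<delta> g x)) \<and>
     (\<forall>f g a b. lipb S f \<longrightarrow> lipb S g \<longrightarrow>
        (AE x in completion \<mu>. x \<in> S \<longrightarrow>
           \<delta> (\<lambda>y. a * f y + b * g y) x = a * \<delta> f x + b * \<delta> g x)) \<and>
     (\<forall>f g. lipb S f \<longrightarrow> lipb S g \<longrightarrow>
        (AE x in completion \<mu>. x \<in> S \<longrightarrow>
           \<delta> (\<lambda>y. f y * g y) x = f x * \<delta> g x + g x * \<delta> f x)) \<and>
     (\<forall>(F :: ('a \<Rightarrow> real) filter) f C. lipb S f \<longrightarrow>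
        (\<forall>\<^sub>F g in F. lipb S g \<and> lip_norm S g \<le> C) \<longrightarrow>
        (\<forall>x\<in>S. ((\<lambda>g. g x) \<longlongrightarrow> f x) F) \<longrightarrow>
        (\<forall>h. set_integrable (completion \<mu>) S h \<longrightarrow>
           ((\<lambda>g. LINT x:S|completion \<mu>. \<delta> g x * h x) \<longlongrightarrow>
              (LINT x:S|completion \<mu>. \<delta> f x * h x)) F))"

definition op_norm :: "'a::metric_space set \<Rightarrow> 'a measure \<Rightarrow> (('a \<Rightarrow> real) \<Rightarrow> ('a \<Rightarrow> real)) \<Rightarrow> ereal" where
  "op_norm S \<mu> \<delta> = Sup {Linf_norm (completion \<mu>) S (\<delta> f) | f. lipb S f \<and> lip_norm S f \<le> 1}"

end

theory Submission
  imports Defs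
begin

lemma lipb_sub: "lipb UNIV f \<Longrightarrow> lipb T f"
  unfolding lipb_def
  by (meson bounded_subset image_mono lipschitz_on_subset subset_UNIV)

lemma lipb_bounds:
  assumes "lipb UNIV f" shows "\<exists>c\<ge>1. (\<forall>x. \<bar>f x\<bar> \<le> c) \<and> c-lipschitz_on UNIV f"
proof -
  from assms obtain B L where B: "\<forall>x. \<bar>f x\<bar> \<le> B" and L: "L-lipschitz_on UNIV f"
    unfolding lipb_def bounded_iff by auto
  show ?thesis
    apply (rule exI[of _ "max 1 (max B L)"])
    using B L by (auto intro: lipschitz_on_le order_trans)
qed

lemma lip_norm_mono:
  assumes "lipb UNIV f" "T \<noteq> {}"
  shows "lip_norm T f \<le> lip_norm UNIV f"
proof -
  from assms obtain B L where B: "\<forall>x. \<bar>f x\<bar> \<le> B" and L: "L-lipschitz_on UNIV f"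
    unfolding lipb_def bounded_iff by auto
  have 1: "(SUP x\<in>T. \<bar>f x\<bar>) \<le> (SUP x\<in>UNIV. \<bar>f x\<bar>)"
    apply (rule cSUP_subset_mono) using assms(2) B by (auto intro: bdd_aboveI2)
  have 2: "lip_const T f \<le> lip_const UNIV f"
    unfolding lip_const_def
    apply (rule cInf_superset_mono)
    using L by (auto intro: lipschitz_on_subset bdd_belowI[of _ 0] simp: lipschitz_on_def)
  show ?thesis using 1 2 unfolding lip_norm_def by auto
qed

lemma lip_norm_bounds:
  assumes "lipb UNIV g" "lip_norm UNIV g \<le> C"
  shows "(\<forall>x. \<bar>g x\<bar> \<le> C) \<and> (C+1)-lipschitz_on UNIV g"
proof -
  from assms obtain B L where B: "\<forall>x. \<bar>g x\<bar> \<le> B" and L: "L-lipschitz_on UNIV g"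
    unfolding lipb_def bounded_iff by auto
  have "\<bar>g x\<bar> \<le> C" for x
  proof -
    have "\<bar>g x\<bar> \<le> (SUP x\<in>UNIV. \<bar>g x\<bar>)"
      apply (rule cSUP_upper) using B by (auto intro: bdd_aboveI2)
    then show ?thesis using assms(2) unfolding lip_norm_def by auto
  qed
  moreover have "Inf {L. L-lipschitz_on UNIV g} < C + 1"
    using assms(2) unfolding lip_norm_def lip_const_def by auto
  then obtain L' where "L'-lipschitz_on UNIV g" "L' < C+1"
    using L by (subst (asm) cInf_less_iff) (auto intro: bdd_belowI[of _ 0] simp: lipschitz_on_def)
  then have "(C+1)-lipschitz_on UNIV g" by (auto intro: lipschitz_on_le)
  ultimately show ?thesis by auto
qed

lemma deriv_bound:
  assumes d: "derivation S \<mu> \<delta>" and op: "op_norm S \<mu> \<delta> \<le> 1" and ne: "S \<noteq> {}"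
    and c: "1 \<le> c" and gb: "\<forall>x\<in>S. \<bar>g x\<bar> \<le> c" and gl: "c-lipschitz_on S g"
  shows "AE x in completion \<mu>. x \<in> S \<longrightarrow> \<bar>\<delta> g x\<bar> \<le> 2*c"
proof -
  define g' where "g' = (\<lambda>y. (1/c) * g y + 0 * g y)"
  have lg: "lipb S g" unfolding lipb_def bounded_iff using gb gl by auto
  have lin: "AE x in completion \<mu>. x \<in> S \<longrightarrow> \<delta> g' x = (1/c) * \<delta> g x + 0 * \<delta> g x"
    using d lg unfolding derivation_def g'_def by blast
  have g'b: "\<forall>x\<in>S. \<bar>g' x\<bar> \<le> 1" using gb c by (auto simp: g'_def divide_simps)
  have g'l: "1-lipschitz_on S g'"
    using gl c unfolding lipschitz_on_def g'_def dist_real_def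
    by (auto simp: divide_simps abs_mult simp flip: right_diff_distrib) (metis mult.commute)
  have lg': "lipb S g'" unfolding lipb_def bounded_iff using g'b g'l by auto
  have "lip_norm S g' \<le> 1"
  proof -
    have "(SUP x\<in>S. \<bar>g' x\<bar>) \<le> 1" using ne g'b by (auto intro: cSUP_least)
    moreover have "lip_const S g' \<le> 1" unfolding lip_const_def
      apply (rule cInf_lower) using g'l by (auto intro: bdd_belowI[of _ 0] simp: lipschitz_on_def)
    ultimately show ?thesis unfolding lip_norm_def by auto
  qed
  then have "Linf_norm (completion \<mu>) S (\<delta> g') \<le> op_norm S \<mu> \<delta>"
    unfolding op_norm_def using lg' by (auto intro!: Sup_upper)
  with op have "Linf_norm (completion \<mu>) S (\<delta> g') < 2" by (simp add: order.strict_trans1)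
  then obtain C where C: "AE x in completion \<mu>. x \<in> S \<longrightarrow> ereal \<bar>\<delta> g' x\<bar> \<le> C" "C < 2"
    unfolding Linf_norm_def by (auto simp: Inf_less_iff)
  show ?thesis using C lin
  proof eventually_elim
    case (elim x)
    have "ereal \<bar>\<delta> g' x\<bar> < 2" using elim C(2) by (meson order.strict_trans1)
    then have "\<bar>\<delta> g' x\<bar> < 2" by simp
    moreover have "\<delta> g x = c * \<delta> g' x" using elim c by auto
    ultimately show ?case using c by (auto simp: abs_mult)
  qed
qed

lemma deriv_bound1:
  assumes d: "derivation S \<mu> \<delta>" and op: "op_norm S \<mu> \<delta> \<le> 1"
    and f: "lipb S f" "lip_norm S f \<le> 1" and e: "0 < e"
  shows "AE x in completion \<mu>. x \<in> S \<longrightarrow> \<bar>\<delta> f x\<bar> \<le> 1 + e"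
proof -
  have "Linf_norm (completion \<mu>) S (\<delta> f) \<le> op_norm S \<mu> \<delta>"
    unfolding op_norm_def using f by (auto intro!: Sup_upper)
  with op e have "Linf_norm (completion \<mu>) S (\<delta> f) < ereal (1 + e)" by (simp add: order.strict_trans1)
  then obtain C where C: "AE x in completion \<mu>. x \<in> S \<longrightarrow> ereal \<bar>\<delta> f x\<bar> \<le> C" "C < ereal (1+e)"
    unfolding Linf_norm_def by (auto simp: Inf_less_iff)
  show ?thesis using C(1) apply eventually_elim
    using C(2) by (metis ereal_less_eq(3) less_imp_le order.trans)
qed


lemma single_sum:
  fixes \<phi> :: "nat \<Rightarrow> real"
  assumes "x \<in> X i" "\<forall>j. x \<in> X j \<longrightarrow> j = i"
  shows "(\<lambda>j. indicator (X j) x * \<phi> j) sums \<phi> i"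
proof -
  have "(\<lambda>j. indicator (X j) x * \<phi> j) = (\<lambda>j. if j = i then \<phi> i else 0)"
  proof
    fix j show "indicator (X j) x * \<phi> j = (if j = i then \<phi> i else 0)"
    proof (cases "j = i")
      case True then show ?thesis using assms(1) by simp
    next
      case False
      then have "x \<notin> X j" using assms(2) by blast
      then show ?thesis using False by simp
    qed
  qed
  then show ?thesis using sums_single[of i "\<lambda>_. \<phi> i"] by simp
qed

lemma single_psum:
  fixes a :: real and X :: "nat \<Rightarrow> 'a set"
  assumes "\<forall>j. x \<in> X j \<longrightarrow> j = i" "0 \<le> a"
  shows "(\<Sum>j<n. indicator (X j) x * a) \<le> a"
proof -
  have "(\<Sum>j<n. indicator (X j) x * a) = (\<Sum>j<n. if j = i then indicator (X i) x * a else 0)"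
  proof (rule sum.cong[OF refl])
    fix j show "indicator (X j) x * a = (if j = i then indicator (X i) x * a else 0)"
    proof (cases "j = i")
      case False
      then have "x \<notin> X j" using assms(1) by blast
      then show ?thesis using False by simp
    qed simp
  qed
  also have "\<dots> = (if i < n then indicator (X i) x * a else 0)"
    using sum.delta[of "{..<n}" i "\<lambda>_. indicator (X i) x * a"] by simp
  also have "\<dots> \<le> a" using assms(2) by (simp add: indicator_def)
  finally show ?thesis .
qed

lemma tannery_filter:
  fixes a :: "nat \<Rightarrow> 'b \<Rightarrow> real"
  assumes "\<And>k. ((\<lambda>n. a k n) \<longlongrightarrow> b k) F"
    and "eventually (\<lambda>n. \<forall>k. \<bar>a k n\<bar> \<le> M k) F"
    and "summable M"
  shows "((\<lambda>n. suminf (\<lambda>k. a k n)) \<longlongrightarrow> suminf b) F"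
proof (cases "F = bot")
  case True then show ?thesis by simp
next
  case False
  have "eventually (\<lambda>(k,n). norm (a k n) \<le> M k) (at_top \<times>\<^sub>F F)"
    unfolding eventually_prod_filter
    by (rule exI[of _ "\<lambda>_. True"], rule exI[of _ "\<lambda>n. \<forall>k. \<bar>a k n\<bar> \<le> M k"]) (use assms(2) in auto)
  from tannerys_theorem[OF assms(1) this assms(3) False] show ?thesis by blast
qed

lemma der_lin:
  assumes "derivation S \<mu> \<delta>" "lipb S f" "lipb S g"
  shows "AE x in completion \<mu>. x \<in> S \<longrightarrow>
           \<delta> (\<lambda>y. a * f y + b * g y) x = a * \<delta> f x + b * \<delta> g x"
  using assms(1)[unfolded derivation_def, THEN conjunct2, THEN conjunct2, THEN conjunct1] assms(2,3) by blast

lemma der_leib: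
  assumes "derivation S \<mu> \<delta>" "lipb S f" "lipb S g"
  shows "AE x in completion \<mu>. x \<in> S \<longrightarrow>
           \<delta> (\<lambda>y. f y * g y) x = f x * \<delta> g x + g x * \<delta> f x"
  using assms(1)[unfolded derivation_def, THEN conjunct2, THEN conjunct2, THEN conjunct2, THEN conjunct1] assms(2,3) by blast

lemma der_meas:
  assumes "derivation S \<mu> \<delta>" "lipb S f"
  shows "(\<lambda>x. indicator S x * \<delta> f x) \<in> borel_measurable (completion \<mu>)"
  using assms(1)[unfolded derivation_def, THEN conjunct1] assms(2) unfolding set_borel_measurable_def by simp

lemma der_cont:
  assumes "derivation S \<mu> \<delta>" "lipb S f"
    "\<forall>\<^sub>F g in F. lipb S g \<and> lip_norm S g \<le> C"
    "\<forall>x\<in>S. ((\<lambda>g. g x) \<longlongrightarrow> f x) F"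
    "set_integrable (completion \<mu>) S h"
  shows "((\<lambda>g. LINT x:S|completion \<mu>. \<delta> g x * h x) \<longlongrightarrow>
              (LINT x:S|completion \<mu>. \<delta> f x * h x)) F"
  using assms(1)[unfolded derivation_def, THEN conjunct2, THEN conjunct2, THEN conjunct2, THEN conjunct2] assms(2-5) by blast


context
  fixes \<mu> :: "'a::metric_space measure"
    and X :: "nat \<Rightarrow> 'a set"
    and \<delta>\<^sub>i :: "nat \<Rightarrow> ('a \<Rightarrow> real) \<Rightarrow> ('a \<Rightarrow> real)"
    and M :: "'a measure" and D :: "('a \<Rightarrow> real) \<Rightarrow> 'a \<Rightarrow> real" and N :: "'a set"
  assumes rad: "radon_measure \<mu>"
    and dec: "measurable_decomposition \<mu> X"
    and der: "\<And>i. derivation (X i) \<mu> (\<delta>\<^sub>i i)"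
    and opn: "\<And>i. op_norm (X i) \<mu> (\<delta>\<^sub>i i) \<le> 1"
    and M_def: "M = completion \<mu>"
    and D_def: "D = (\<lambda>f x. \<Sum>i. indicator (X i) x * \<delta>\<^sub>i i f x)"
    and N_def: "N = (UNIV - (\<Union>i. X i)) \<union> (\<Union>i. \<Union>j. if i = j then {} else X i \<inter> X j)"
begin
lemma sp\<mu>: "space \<mu> = UNIV"
  using rad unfolding radon_measure_def by (metis sets_eq_imp_space_eq space_borel)
lemma spM: "space M = UNIV" unfolding M_def using sp\<mu> by simp
lemma Xs: "\<And>i. X i \<in> sets M" using dec unfolding measurable_decomposition_def M_def by auto
lemma N: "N \<in> null_sets M"
  using dec sp\<mu> unfolding measurable_decomposition_def N_def M_def
  by (intro null_sets.Un null_sets_UN) auto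
lemma AEN: "AE x in M. x \<notin> N" using N by (rule AE_not_in)
lemma uniq: assumes that: "x \<notin> N" shows "\<exists>i. x \<in> X i \<and> (\<forall>j. x \<in> X j \<longrightarrow> j = i)"
  using that unfolding N_def by (auto split: if_splits)
lemma Dsingle: assumes that: "x \<in> X i" "\<forall>j. x \<in> X j \<longrightarrow> j = i" shows "D f x = \<delta>\<^sub>i i f x"
  unfolding D_def using single_sum[OF that, of "\<lambda>j. \<delta>\<^sub>i j f x"] by (simp add: sums_iff)
lemma Dmeas: assumes that: "lipb UNIV f" shows "D f \<in> borel_measurable M"
proof -
  have "\<And>i. (\<lambda>x. indicator (X i) x * \<delta>\<^sub>i i f x) \<in> borel_measurable M"
    using der_meas[OF der lipb_sub[OF that]] unfolding M_def .
  then show ?thesis unfolding D_def by (rule borel_measurable_suminf)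
qed

lemma Dbound: assumes that: "1 \<le> c" "\<forall>x. \<bar>g x\<bar> \<le> c" "c-lipschitz_on UNIV g"
  shows "AE x in M. \<forall>i. x \<in> X i \<longrightarrow> \<bar>\<delta>\<^sub>i i g x\<bar> \<le> 2*c"
proof (subst AE_all_countable, intro allI)
  fix i
  show "AE x in M. x \<in> X i \<longrightarrow> \<bar>\<delta>\<^sub>i i g x\<bar> \<le> 2*c"
  proof (cases "X i = {}")
    case True then show ?thesis by simp
  next
    case False
    show ?thesis unfolding M_def
      using deriv_bound[OF der opn False that(1), of g] that(2) lipschitz_on_subset[OF that(3)] by blast
  qed
qed
lemma part1: "\<forall>f. lipb UNIV f \<longrightarrow>
      set_borel_measurable M UNIV (D f) \<and> (\<exists>C. AE x in M. x \<in> UNIV \<longrightarrow> \<bar>D f x\<bar> \<le> C)"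
proof (intro allI impI conjI)
  fix f :: "'a \<Rightarrow> real" assume f: "lipb UNIV f"
  show "set_borel_measurable M UNIV (D f)"
    unfolding set_borel_measurable_def using Dmeas[OF f] by simp
  obtain c where c: "1 \<le> c" "\<forall>x. \<bar>f x\<bar> \<le> c" "c-lipschitz_on UNIV f"
    using lipb_bounds[OF f] by auto
  show "\<exists>C. AE x in M. x \<in> UNIV \<longrightarrow> \<bar>D f x\<bar> \<le> C"
    apply (rule exI[of _ "2*c"])
    using Dbound[OF c] AEN
  proof eventually_elim
    case (elim x)
    from uniq[OF elim(2)] obtain i where i: "x \<in> X i" "\<forall>j. x \<in> X j \<longrightarrow> j = i" by blast
    show ?case using elim(1) i(1) Dsingle[OF i] by simp
  qed
qed
lemma part2: "\<forall>f g. lipb UNIV f \<longrightarrow> lipb UNIV g \<longrightarrow> (\<forall>x\<in>UNIV. f x = g x) \<longrightarrow>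
      (AE x in M. x \<in> UNIV \<longrightarrow> D f x = D g x)"
proof (intro allI impI)
  fix f g :: "'a \<Rightarrow> real" assume "\<forall>x\<in>UNIV. f x = g x"
  then have "f = g" by (intro ext) simp
  then show "AE x in M. x \<in> UNIV \<longrightarrow> D f x = D g x" by simp
qed
lemma part3: "\<forall>f g a b. lipb UNIV f \<longrightarrow> lipb UNIV g \<longrightarrow>
      (AE x in M. x \<in> UNIV \<longrightarrow> D (\<lambda>y. a * f y + b * g y) x = a * D f x + b * D g x)"
proof (intro allI impI)
  fix f g :: "'a \<Rightarrow> real" and a b :: real assume f: "lipb UNIV f" and g: "lipb UNIV g"
  have "AE x in M. \<forall>i. x \<in> X i \<longrightarrow>
         \<delta>\<^sub>i i (\<lambda>y. a * f y + b * g y) x = a * \<delta>\<^sub>i i f x + b * \<delta>\<^sub>i i g x"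
    unfolding M_def AE_all_countable using der_lin[OF der lipb_sub[OF f] lipb_sub[OF g]] by blast
  then show "AE x in M. x \<in> UNIV \<longrightarrow> D (\<lambda>y. a * f y + b * g y) x = a * D f x + b * D g x"
    using AEN
  proof eventually_elim
    case (elim x)
    from uniq[OF elim(2)] obtain i where i: "x \<in> X i" "\<forall>j. x \<in> X j \<longrightarrow> j = i" by blast
    show ?case using elim(1) i(1) Dsingle[OF i] by simp
  qed
qed
lemma part4: "\<forall>f g. lipb UNIV f \<longrightarrow> lipb UNIV g \<longrightarrow>
      (AE x in M. x \<in> UNIV \<longrightarrow> D (\<lambda>y. f y * g y) x = f x * D g x + g x * D f x)"
proof (intro allI impI)
  fix f g :: "'a \<Rightarrow> real" assume f: "lipb UNIV f" and g: "lipb UNIV g"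
  have "AE x in M. \<forall>i. x \<in> X i \<longrightarrow>
         \<delta>\<^sub>i i (\<lambda>y. f y * g y) x = f x * \<delta>\<^sub>i i g x + g x * \<delta>\<^sub>i i f x"
    unfolding M_def AE_all_countable using der_leib[OF der lipb_sub[OF f] lipb_sub[OF g]] by blast
  then show "AE x in M. x \<in> UNIV \<longrightarrow> D (\<lambda>y. f y * g y) x = f x * D g x + g x * D f x"
    using AEN
  proof eventually_elim
    case (elim x)
    from uniq[OF elim(2)] obtain i where i: "x \<in> X i" "\<forall>j. x \<in> X j \<longrightarrow> j = i" by blast
    show ?case using elim(1) i(1) Dsingle[OF i] by simp
  qed
qed
lemma opD: "op_norm UNIV \<mu> D \<le> 1"
  unfolding op_norm_def
proof (rule Sup_least, clarify)
  fix f :: "'a \<Rightarrow> real" assume f: "lipb UNIV f" "lip_norm UNIV f \<le> 1"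
  show "Linf_norm (completion \<mu>) UNIV (D f) \<le> 1"
  proof (rule ereal_le_epsilon2)
    fix e :: real assume e: "0 < e"
    have "AE x in M. \<forall>i. x \<in> X i \<longrightarrow> \<bar>\<delta>\<^sub>i i f x\<bar> \<le> 1 + e"
    proof (subst AE_all_countable, intro allI)
      fix i
      show "AE x in M. x \<in> X i \<longrightarrow> \<bar>\<delta>\<^sub>i i f x\<bar> \<le> 1 + e"
      proof (cases "X i = {}")
        case True then show ?thesis by simp
      next
        case False
        have "lip_norm (X i) f \<le> 1" using lip_norm_mono[OF f(1) False] f(2) by simp
        then show ?thesis unfolding M_def
          using deriv_bound1[OF der opn lipb_sub[OF f(1)] _ e] by blast
      qed
    qed
    then have "AE x in M. x \<in> UNIV \<longrightarrow> ereal \<bar>D f x\<bar> \<le> 1 + ereal e"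
      using AEN
    proof eventually_elim
      case (elim x)
      from uniq[OF elim(2)] obtain i where i: "x \<in> X i" "\<forall>j. x \<in> X j \<longrightarrow> j = i" by blast
      show ?case using elim(1) i(1) Dsingle[OF i] by (simp add: add.commute)
    qed
    then show "Linf_norm (completion \<mu>) UNIV (D f) \<le> 1 + ereal e"
      unfolding Linf_norm_def M_def by (auto intro!: Inf_lower)
  qed
qed
lemma part5: "\<forall>(F :: ('a \<Rightarrow> real) filter) f C. lipb UNIV f \<longrightarrow>
      (\<forall>\<^sub>F g in F. lipb UNIV g \<and> lip_norm UNIV g \<le> C) \<longrightarrow>
      (\<forall>x\<in>UNIV. ((\<lambda>g. g x) \<longlongrightarrow> f x) F) \<longrightarrow>
      (\<forall>h. set_integrable M UNIV h \<longrightarrow>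
         ((\<lambda>g. LINT x:UNIV|M. D g x * h x) \<longlongrightarrow>
            (LINT x:UNIV|M. D f x * h x)) F)"
proof (intro allI impI)
  fix F :: "('a \<Rightarrow> real) filter" and f :: "'a \<Rightarrow> real" and C :: real and h :: "'a \<Rightarrow> real"
  assume f: "lipb UNIV f" and ev: "\<forall>\<^sub>F g in F. lipb UNIV g \<and> lip_norm UNIV g \<le> C"
    and pw: "\<forall>x\<in>UNIV. ((\<lambda>g. g x) \<longlongrightarrow> f x) F" and hi: "set_integrable M UNIV h"
  have hint: "integrable M h" using hi unfolding set_integrable_def by simp
  have hmeas: "h \<in> borel_measurable M" using hint by auto
  obtain cf where cf: "1 \<le> cf" "\<forall>x. \<bar>f x\<bar> \<le> cf" "cf-lipschitz_on UNIV f"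
    using lipb_bounds[OF f] by auto
  define K where "K = max cf (max 1 (C+1))"
  have K1: "1 \<le> K" unfolding K_def by auto
  have cfK: "cf \<le> K" "C + 1 \<le> K" unfolding K_def by auto
  have Kf: "\<forall>x. \<bar>f x\<bar> \<le> K" "K-lipschitz_on UNIV f"
    using cf(2) cfK(1) order_trans apply blast
    using lipschitz_on_le[OF cf(3) cfK(1)] .
  have Kg: "\<forall>\<^sub>F g in F. lipb UNIV g \<and> (\<forall>x. \<bar>g x\<bar> \<le> K) \<and> K-lipschitz_on UNIV g"
    using ev
  proof eventually_elim
    case (elim g)
    then have g1: "\<forall>x. \<bar>g x\<bar> \<le> C" and g2: "(C+1)-lipschitz_on UNIV g"
      using lip_norm_bounds by blast+
    have "\<forall>x. \<bar>g x\<bar> \<le> K"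
    proof
      fix x have "\<bar>g x\<bar> \<le> C" using g1 by blast
      then show "\<bar>g x\<bar> \<le> K" using cfK(2) by linarith
    qed
    moreover have "K-lipschitz_on UNIV g" using lipschitz_on_le[OF g2 cfK(2)] .
    ultimately show ?case using elim by blast
  qed
  have hX: "\<And>i. integrable M (\<lambda>x. indicator (X i) x * \<bar>h x\<bar>)"
    using integrable_mult_indicator[OF Xs integrable_abs[OF hint]] by simp
  define H where "H i = (LINT x:X i|M. \<bar>h x\<bar>)" for i
  have H: "H i = (\<integral>x. indicator (X i) x * \<bar>h x\<bar> \<partial>M)" for i
    unfolding H_def set_lebesgue_integral_def by simp
  have Hsum: "summable H"
  proof (rule summableI_nonneg_bounded)
    fix n show "0 \<le> H n" unfolding H by (auto intro!: integral_nonneg_AE)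
    have "(\<Sum>i<n. H i) = (\<integral>x. (\<Sum>i<n. indicator (X i) x * \<bar>h x\<bar>) \<partial>M)"
      unfolding H using Bochner_Integration.integral_sum[where I="{..<n}" and M=M and f="\<lambda>i x. indicator (X i) x * \<bar>h x\<bar>"] hX by simp
    also have "\<dots> \<le> (\<integral>x. \<bar>h x\<bar> \<partial>M)"
    proof (rule integral_mono_AE)
      show "integrable M (\<lambda>x. \<Sum>i<n. indicator (X i) x * \<bar>h x\<bar>)" by (intro Bochner_Integration.integrable_sum hX)
      show "integrable M (\<lambda>x. \<bar>h x\<bar>)" using hint by auto
      show "AE x in M. (\<Sum>i<n. indicator (X i) x * \<bar>h x\<bar>) \<le> \<bar>h x\<bar>"
        using AEN
      proof eventually_elim
        case (elim x)
        from uniq[OF elim] obtain i where i: "x \<in> X i" "\<forall>j. x \<in> X j \<longrightarrow> j = i" by blast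
        show ?case by (rule single_psum[OF i(2)]) simp
      qed
    qed
    finally show "(\<Sum>i<n. H i) \<le> (\<integral>x. \<bar>h x\<bar> \<partial>M)" .
  qed
  have key: "(\<forall>i. \<bar>LINT x:X i|M. \<delta>\<^sub>i i g x * h x\<bar> \<le> 2*K*H i) \<and>
             (LINT x:UNIV|M. D g x * h x) = (\<Sum>i. LINT x:X i|M. \<delta>\<^sub>i i g x * h x)"
    if gb: "\<forall>x. \<bar>g x\<bar> \<le> K" and gl: "K-lipschitz_on UNIV g" for g
  proof -
    have lg: "lipb UNIV g" unfolding lipb_def bounded_iff using gb gl by (intro conjI exI[of _ K]) auto
    have KB: "AE x in M. \<forall>i. x \<in> X i \<longrightarrow> \<bar>\<delta>\<^sub>i i g x\<bar> \<le> 2*K" by (rule Dbound[OF K1 gb gl])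
    define \<phi> where "\<phi> = (\<lambda>i x. indicator (X i) x * (\<delta>\<^sub>i i g x * h x))"
    have \<phi>m: "\<phi> i \<in> borel_measurable M" for i
    proof -
      have "(\<lambda>x. indicator (X i) x * \<delta>\<^sub>i i g x) \<in> borel_measurable M"
        using der_meas[OF der lipb_sub[OF lg]] unfolding M_def .
      then have "(\<lambda>x. (indicator (X i) x * \<delta>\<^sub>i i g x) * h x) \<in> borel_measurable M"
        using hmeas by (rule borel_measurable_times)
      moreover have "\<phi> i = (\<lambda>x. (indicator (X i) x * \<delta>\<^sub>i i g x) * h x)"
        unfolding \<phi>_def by (rule ext) (rule mult.assoc[symmetric])
      ultimately show ?thesis by simp
    qed
    have \<phi>b: "AE x in M. \<bar>\<phi> i x\<bar> \<le> 2*K * (indicator (X i) x * \<bar>h x\<bar>)" for i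
      using KB
    proof eventually_elim
      case (elim x)
      show ?case
      proof (cases "x \<in> X i")
        case True
        then have "\<bar>\<delta>\<^sub>i i g x\<bar> \<le> 2*K" using elim by auto
        then show ?thesis using True unfolding \<phi>_def
          by (auto simp: abs_mult intro!: mult_right_mono)
      qed (simp add: \<phi>_def)
    qed
    have \<phi>i: "integrable M (\<phi> i)" for i
    proof (rule Bochner_Integration.integrable_bound[OF _ \<phi>m])
      show "integrable M (\<lambda>x. 2*K * (indicator (X i) x * \<bar>h x\<bar>))" using hX by auto
      show "AE x in M. norm (\<phi> i x) \<le> norm (2*K * (indicator (X i) x * \<bar>h x\<bar>))"
        using \<phi>b[of i] by eventually_elim (use K1 in \<open>auto simp: abs_mult\<close>)
    qed
    have \<phi>n: "(\<integral>x. norm (\<phi> i x) \<partial>M) \<le> 2*K*H i" for i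
    proof -
      have "(\<integral>x. norm (\<phi> i x) \<partial>M) \<le> (\<integral>x. 2*K * (indicator (X i) x * \<bar>h x\<bar>) \<partial>M)"
        using \<phi>b[of i] \<phi>i[of i] hX[of i] by (intro integral_mono_AE) auto
      also have "\<dots> = 2*K*H i" unfolding H by simp
      finally show ?thesis .
    qed
    have LI: "(LINT x:X i|M. \<delta>\<^sub>i i g x * h x) = integral\<^sup>L M (\<phi> i)" for i
      unfolding set_lebesgue_integral_def \<phi>_def by (simp only: real_scaleR_def)
    have part_a: "\<bar>LINT x:X i|M. \<delta>\<^sub>i i g x * h x\<bar> \<le> 2*K*H i" for i
      unfolding LI by (rule order_trans[OF Bochner_Integration.integral_abs_bound]) (use \<phi>n[of i] in simp)
    have sumAE: "AE x in M. summable (\<lambda>i. norm (\<phi> i x))"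
      using AEN
    proof eventually_elim
      case (elim x)
      from uniq[OF elim] obtain i where i: "x \<in> X i" "\<forall>j. x \<in> X j \<longrightarrow> j = i" by blast
      have "(\<lambda>j. indicator (X j) x * \<bar>\<delta>\<^sub>i j g x * h x\<bar>) sums \<bar>\<delta>\<^sub>i i g x * h x\<bar>"
        by (rule single_sum[OF i])
      then show ?case unfolding \<phi>_def by (auto simp: abs_mult sums_iff)
    qed
    have sumI: "summable (\<lambda>i. \<integral>x. norm (\<phi> i x) \<partial>M)"
      by (rule summable_comparison_test[OF _ summable_mult[OF Hsum, of "2*K"]])
         (use \<phi>n in \<open>auto intro!: exI[of _ 0]\<close>)
    have "(LINT x:UNIV|M. D g x * h x) = (\<integral>x. (\<Sum>i. \<phi> i x) \<partial>M)"
    proof -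
      have "(LINT x:UNIV|M. D g x * h x) = (\<integral>x. D g x * h x \<partial>M)"
        unfolding set_lebesgue_integral_def by simp
      also have "\<dots> = (\<integral>x. (\<Sum>i. \<phi> i x) \<partial>M)"
      proof (rule integral_cong_AE)
        show "(\<lambda>x. D g x * h x) \<in> borel_measurable M" using Dmeas[OF lg] hmeas by simp
        show "(\<lambda>x. \<Sum>i. \<phi> i x) \<in> borel_measurable M" using \<phi>m by (rule borel_measurable_suminf)
        show "AE x in M. D g x * h x = (\<Sum>i. \<phi> i x)"
          using AEN
        proof eventually_elim
          case (elim x)
          from uniq[OF elim] obtain i where i: "x \<in> X i" "\<forall>j. x \<in> X j \<longrightarrow> j = i" by blast
          have "(\<lambda>j. indicator (X j) x * (\<delta>\<^sub>i j g x * h x)) sums (\<delta>\<^sub>i i g x * h x)"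
            by (rule single_sum[OF i])
          then show ?case unfolding \<phi>_def using Dsingle[OF i] by (simp add: sums_iff)
        qed
      qed
      finally show ?thesis .
    qed
    also have "\<dots> = (\<Sum>i. integral\<^sup>L M (\<phi> i))"
      by (rule integral_suminf[OF \<phi>i sumAE sumI])
    finally show ?thesis using part_a LI by simp
  qed
  let ?a = "\<lambda>k g. LINT x:X k|M. \<delta>\<^sub>i k g x * h x"
  have lim: "((\<lambda>g. ?a k g) \<longlongrightarrow> ?a k f) F" for k
  proof (cases "X k = {}")
    case True then show ?thesis by (simp add: set_lebesgue_integral_def)
  next
    case False
    show ?thesis unfolding M_def
    proof (rule der_cont[OF der lipb_sub[OF f]])
      show "\<forall>\<^sub>F g in F. lipb (X k) g \<and> lip_norm (X k) g \<le> C"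
        using ev
      proof eventually_elim
        case (elim g)
        then show ?case using lip_norm_mono[OF _ False, of g] lipb_sub[of g "X k"] by fastforce
      qed
      show "\<forall>x\<in>X k. ((\<lambda>g. g x) \<longlongrightarrow> f x) F" using pw by auto
      show "set_integrable (completion \<mu>) (X k) h"
        unfolding set_integrable_def M_def[symmetric] by (rule integrable_mult_indicator[OF Xs hint])
    qed
  qed
  have bnd: "\<forall>\<^sub>F g in F. \<forall>k. \<bar>?a k g\<bar> \<le> 2*K*H k"
    using Kg
  proof eventually_elim
    case (elim g)
    then have "\<forall>x. \<bar>g x\<bar> \<le> K" "K-lipschitz_on UNIV g" by auto
    from key[OF this] show ?case by blast
  qed
  have tl: "((\<lambda>g. \<Sum>k. ?a k g) \<longlongrightarrow> (\<Sum>k. ?a k f)) F"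
    by (rule tannery_filter[OF lim bnd summable_mult[OF Hsum]])
  have ev2: "\<forall>\<^sub>F g in F. (\<Sum>k. ?a k g) = (LINT x:UNIV|M. D g x * h x)"
    using Kg
  proof eventually_elim
    case (elim g)
    then have "\<forall>x. \<bar>g x\<bar> \<le> K" "K-lipschitz_on UNIV g" by auto
    from key[OF this] show ?case by metis
  qed
  have eqf: "(\<Sum>k. ?a k f) = (LINT x:UNIV|M. D f x * h x)"
    using key[OF Kf] by metis
  show "((\<lambda>g. LINT x:UNIV|M. D g x * h x) \<longlongrightarrow> (LINT x:UNIV|M. D f x * h x)) F"
    using Lim_transform_eventually[OF tl ev2] unfolding eqf .
qed

end

theorem lemma2p16:
  fixes \<mu> :: "'a::metric_space measure"
    and X :: "nat \<Rightarrow> 'a set"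
    and \<delta>\<^sub>i :: "nat \<Rightarrow> ('a \<Rightarrow> real) \<Rightarrow> ('a \<Rightarrow> real)"
  assumes "separable_space (euclidean :: 'a topology)"
    and "radon_measure \<mu>"
    and "measurable_decomposition \<mu> X"
    and "\<forall>i. derivation (X i) \<mu> (\<delta>\<^sub>i i)"
    and "\<forall>i. op_norm (X i) \<mu> (\<delta>\<^sub>i i) \<le> 1"
  shows "derivation UNIV \<mu> (\<lambda>f x. \<Sum>i. indicator (X i) x * \<delta>\<^sub>i i f x)
       \<and> op_norm UNIV \<mu> (\<lambda>f x. \<Sum>i. indicator (X i) x * \<delta>\<^sub>i i f x) \<le> 1"
proof -
  have der: "\<And>i. derivation (X i) \<mu> (\<delta>\<^sub>i i)" and opn: "\<And>i. op_norm (X i) \<mu> (\<delta>\<^sub>i i) \<le> 1"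
    using assms by auto
  note P = assms(2) assms(3) der opn refl refl refl
  have derD: "derivation UNIV \<mu> (\<lambda>f x. \<Sum>i. indicator (X i) x * \<delta>\<^sub>i i f x)"
    unfolding derivation_def
    by (intro conjI; (fact part1[OF P] | fact part2[OF P] | fact part3[OF P] | fact part4[OF P] | fact part5[OF P]))
  show ?thesis using derD opD[OF P] by (rule conjI)
qed

end
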